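(* Let $\bm{A}\in\mathbb{R}^{M\times M}$ be diagonal with $\sigma_{\max}(\bm{A})<1$ (largest singular value), $\bm{W}\in\mathbb{R}^{M\times M}$, $\bm{h}_0\in\mathbb{R}^M$, $\alpha_1,\dots,\alpha_B\in\mathbb{R}$, $\bm{h}_1,\dots,\bm{h}_B\in\mathbb{R}^M$. Consider the "clipped" dendPLRNN $$\bm{z}_t=\bm{A}\bm{z}_{t-1}+\bm{W}\sum_{b=1}^B\alpha_b\big[\max(0,\bm{z}_{t-1}-\bm{h}_b)-\max(0,\bm{z}_{t-1})\big]+\bm{h}_0,$$ obtained from the dendPLRNN by adding, for each basis $(\alpha_b,\bm{h}_b)$, a basis $(-\alpha_b,\bm{0})$. Then for every initial condition $\bm{z}_1\in\mathbb{R}^M$ the orbit $(\bm{z}_t)_{t\ge1}$ is bounded.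
   Context: $\max$ is taken componentwise. *)

theory Defs
  imports "HOL-Analysis.Analysis"
begin

definition relu_vec :: "real ^ 'm \<Rightarrow> real ^ 'm" where
  "relu_vec x = (\<chi> i. max 0 (x $ i))"

text \<open>Largest singular value of a square matrix = operator 2-norm of x -> A x.\<close>
definition sigma_max :: "real ^ 'm ^ 'm \<Rightarrow> real" where
  "sigma_max A = onorm (\<lambda>x. A *v x)"

definition is_diagonal :: "real ^ 'm ^ 'm \<Rightarrow> bool" where
  "is_diagonal A \<longleftrightarrow> (\<forall>i j. i \<noteq> j \<longrightarrow> A $ i $ j = 0)"

definition clipped_step ::
  "real ^ 'm ^ 'm \<Rightarrow> real ^ 'm ^ 'm \<Rightarrow> real ^ 'm \<Rightarrow> nat \<Rightarrow> (nat \<Rightarrow> real)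
     \<Rightarrow> (nat \<Rightarrow> real ^ 'm) \<Rightarrow> real ^ 'm \<Rightarrow> real ^ 'm" where
  "clipped_step A W h0 B alpha h z =
     A *v z + W *v (\<Sum>b = 1..B. alpha b *\<^sub>R (relu_vec (z - h b) - relu_vec z)) + h0"

end

theory Submission
  imports Defs
begin

lemma relu_diff_norm: "norm (relu_vec (z - hb) - relu_vec z) \<le> norm (hb::real^'m)"
proof (rule norm_le_componentwise_cart)
  fix i
  show "norm ((relu_vec (z - hb) - relu_vec z) $ i) \<le> norm (hb $ i)"
    by (simp add: relu_vec_def max_def)
qed

theorem theorem2:
  fixes A W :: "real ^ 'm ^ 'm" and h0 :: "real ^ 'm" and B :: nat
    and alpha :: "nat \<Rightarrow> real" and h :: "nat \<Rightarrow> real ^ 'm"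
    and z :: "nat \<Rightarrow> real ^ 'm"
  assumes "is_diagonal A"
    and "sigma_max A < 1"
    and "\<And>t. t \<ge> 2 \<Longrightarrow> z t = clipped_step A W h0 B alpha h (z (t - 1))"
  shows "bounded (z ` {1..})"
proof -
  define s where "s = sigma_max A"
  define K where "K = onorm (\<lambda>x. W *v x) * (\<Sum>b = 1..B. \<bar>alpha b\<bar> * norm (h b)) + norm h0"
  have s0: "0 \<le> s" unfolding s_def sigma_max_def by (rule onorm_pos_le) simp
  have s1: "s < 1" using assms(2) s_def by simp
  have Ax: "norm (A *v x) \<le> s * norm x" for x
    unfolding s_def sigma_max_def by (rule onorm) simp
  have stepb: "norm (clipped_step A W h0 B alpha h x) \<le> s * norm x + K" for x
  proof -
    let ?v = "(\<Sum>b = 1..B. alpha b *\<^sub>R (relu_vec (x - h b) - relu_vec x))"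
    have "norm ?v \<le> (\<Sum>b = 1..B. norm (alpha b *\<^sub>R (relu_vec (x - h b) - relu_vec x)))"
      by (rule norm_sum)
    also have "\<dots> \<le> (\<Sum>b = 1..B. \<bar>alpha b\<bar> * norm (h b))"
      by (rule sum_mono) (simp add: mult_left_mono relu_diff_norm)
    finally have v: "norm ?v \<le> (\<Sum>b = 1..B. \<bar>alpha b\<bar> * norm (h b))" .
    have "norm (W *v ?v) \<le> onorm (\<lambda>x. W *v x) * norm ?v" by (rule onorm) simp
    also have "\<dots> \<le> onorm (\<lambda>x. W *v x) * (\<Sum>b = 1..B. \<bar>alpha b\<bar> * norm (h b))"
      by (rule mult_left_mono[OF v]) (rule onorm_pos_le, simp)
    finally have wv: "norm (W *v ?v) \<le> onorm (\<lambda>x. W *v x) * (\<Sum>b = 1..B. \<bar>alpha b\<bar> * norm (h b))" .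
    have "norm (clipped_step A W h0 B alpha h x) \<le> norm (A *v x) + norm (W *v ?v) + norm h0"
      unfolding clipped_step_def by (meson norm_triangle_le norm_triangle_ineq add_mono order_refl)
    thus ?thesis using Ax[of x] wv unfolding K_def by linarith
  qed
  have K0: "0 \<le> K" unfolding K_def
    by (intro add_nonneg_nonneg mult_nonneg_nonneg onorm_pos_le sum_nonneg) auto
  define R where "R = max (norm (z 1)) (K / (1 - s))"
  have KR: "K \<le> (1 - s) * R"
  proof -
    have "K = (1 - s) * (K / (1 - s))" using s1 by simp
    also have "\<dots> \<le> (1 - s) * R" unfolding R_def by (rule mult_left_mono) (use s1 in auto)
    finally show ?thesis .
  qed
  have bnd: "norm (z t) \<le> R" if "t \<ge> 1" for t
    using that
  proof (induction t rule: dec_induct)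
    case base then show ?case unfolding R_def by simp
  next
    case (step n)
    have "z (Suc n) = clipped_step A W h0 B alpha h (z n)"
      using assms(3)[of "Suc n"] step.hyps by simp
    hence "norm (z (Suc n)) \<le> s * norm (z n) + K" using stepb by simp
    also have "\<dots> \<le> s * R + K" using step.IH s0 by (simp add: mult_left_mono)
    also have "\<dots> \<le> R" using KR by (simp add: algebra_simps)
    finally show ?case .
  qed
  show ?thesis unfolding bounded_iff using bnd by blast
qed

end
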